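(* Consider the following online optimization setting over $T$ rounds with decision space $[0,1)$. Before the game, an oblivious adversary fixes, for every round $t\in\{1,\dots,T\}$, probability distributions $D_{t,1},\dots,D_{t,k-1}$ supported in $(0,1)$ with densities bounded by $\sigma$, and values $v_{t,1},\dots,v_{t,k}\in[0,1]$. Nature independently draws $a'_{t,i}\sim D_{t,i}$; let $a_{t,1}\le\dots\le a_{t,k-1}$ be these points sorted, $a_{t,0}=0$, $a_{t,k}=1$, and define $f_t(x)=v_{t,i}$ for $x\in[a_{t,i-1},a_{t,i})$. In the full-information setting, run the following algorithm with $\eta=\sqrt{\log(k^2T^3\sigma)/((e-2)T)}$: set $F_1\equiv 0$ on $[0,1)$; for $t=1,\dots,T$, let $p_t(x)=\exp(\eta F_t(x))/\int_0^1\exp(\eta F_t(y))\,dy$, draw $x_t\sim p_t$, receive payoff $f_t(x_t)$, observe $f_t$, and set $F_{t+1}=F_t+f_t$. Then the expected regret $$\mathbb{E}\Bigl[\max_{x\in[0,1)}\sum_{t=1}^T f_t(x)-\sum_{t=1}^T f_t(x_t)\Bigr],$$ with expectation over both the algorithm's random choices and nature's draws, is at most $$2\sqrt{(e-2)\log(k^2T^3\sigma)\,T}+1.$$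
   Context: $\log$ denotes the natural logarithm. *)

theory Defs
  imports "HOL-Probability.Probability"
begin

text \<open>Nature's draws are a function a :: nat \<times> nat \<Rightarrow> real, a (t,i) = a'_{t,i}.
  Breakpoints a_{t,0} = 0, a_{t,i} = i-th smallest of a'_{t,1..k-1}, a_{t,k} = 1.\<close>
definition pts :: "nat \<Rightarrow> (nat \<times> nat \<Rightarrow> real) \<Rightarrow> nat \<Rightarrow> nat \<Rightarrow> real" where
  "pts k a t i = (if i = 0 then 0 else if k \<le> i then 1
                  else sort (map (\<lambda>j. a (t, j)) [1..<k]) ! (i - 1))"

definition payoff :: "nat \<Rightarrow> (nat \<Rightarrow> nat \<Rightarrow> real) \<Rightarrow> (nat \<times> nat \<Rightarrow> real) \<Rightarrow> nat \<Rightarrow> real \<Rightarrow> real" where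
  "payoff k v a t x = v t (LEAST i. x < pts k a t i)"

definition cum :: "nat \<Rightarrow> (nat \<Rightarrow> nat \<Rightarrow> real) \<Rightarrow> (nat \<times> nat \<Rightarrow> real) \<Rightarrow> nat \<Rightarrow> real \<Rightarrow> real" where
  "cum k v a t x = (\<Sum>s\<in>{1..<t}. payoff k v a s x)"

definition alg_density :: "real \<Rightarrow> nat \<Rightarrow> (nat \<Rightarrow> nat \<Rightarrow> real) \<Rightarrow> (nat \<times> nat \<Rightarrow> real) \<Rightarrow> nat \<Rightarrow> real \<Rightarrow> real" where
  "alg_density \<eta> k v a t x =
     indicator {0..<1} x * exp (\<eta> * cum k v a t x) /
     (\<integral>y. indicator {0..<1} y * exp (\<eta> * cum k v a t y) \<partial>lborel)"

text \<open>Joint law of the algorithm's choices x_1..x_T given nature's draws: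
  each x_t is drawn independently from p_t (p_t depends only on the observed f_s).\<close>
definition alg_measure :: "real \<Rightarrow> nat \<Rightarrow> (nat \<Rightarrow> nat \<Rightarrow> real) \<Rightarrow> nat \<Rightarrow> (nat \<times> nat \<Rightarrow> real) \<Rightarrow> (nat \<Rightarrow> real) measure" where
  "alg_measure \<eta> k v T a =
     PiM {1..T} (\<lambda>t. density lborel (\<lambda>x. ennreal (alg_density \<eta> k v a t x)))"

definition nature_measure :: "nat \<Rightarrow> nat \<Rightarrow> (nat \<Rightarrow> nat \<Rightarrow> real \<Rightarrow> real) \<Rightarrow> (nat \<times> nat \<Rightarrow> real) measure" where
  "nature_measure T k g =
     PiM ({1..T} \<times> {1..<k}) (\<lambda>(t, i). density lborel (\<lambda>x. ennreal (g t i x)))"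

definition regret :: "nat \<Rightarrow> nat \<Rightarrow> (nat \<Rightarrow> nat \<Rightarrow> real) \<Rightarrow> (nat \<times> nat \<Rightarrow> real) \<Rightarrow> (nat \<Rightarrow> real) \<Rightarrow> real" where
  "regret T k v a xs =
     Max ((\<lambda>x. \<Sum>t=1..T. payoff k v a t x) ` {0..<1}) - (\<Sum>t=1..T. payoff k v a t (xs t))"

definition eta :: "nat \<Rightarrow> nat \<Rightarrow> real \<Rightarrow> real" where
  "eta k T \<sigma> = sqrt (ln (real k ^ 2 * real T ^ 3 * \<sigma>) / ((exp 1 - 2) * real T))"

end

theory Submission
  imports Defs
begin

lemma least_range:
  assumes "k \<ge> 1" "0 \<le> x" "x < 1"
  shows "(LEAST i. x < pts k a t i) \<in> {1..k}"
proof -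
  have ex: "x < pts k a t k" using assms by (simp add: pts_def)
  have le: "(LEAST i. x < pts k a t i) \<le> k" by (rule Least_le) (fact ex)
  have "x < pts k a t (LEAST i. x < pts k a t i)" by (rule LeastI) (fact ex)
  moreover have "pts k a t 0 = 0" by (simp add: pts_def)
  ultimately have "(LEAST i. x < pts k a t i) \<noteq> 0" using assms by (metis not_less)
  with le show ?thesis by auto
qed

lemma payoff_const:
  assumes "0 \<le> x" "x < 1" "0 \<le> y" "y < 1"
    and same: "\<And>j. j \<in> {1..<k} \<Longrightarrow> (a (t,j) \<le> x \<longleftrightarrow> a (t,j) \<le> y)"
  shows "payoff k v a t x = payoff k v a t y"
proof -
  have "x < pts k a t i \<longleftrightarrow> y < pts k a t i" for i
  proof (cases "i = 0 \<or> k \<le> i")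
    case True thus ?thesis using assms by (auto simp: pts_def)
  next
    case False
    let ?l = "sort (map (\<lambda>j. a (t, j)) [1..<k])"
    have "i - 1 < length ?l" using False by auto
    hence "?l ! (i-1) \<in> set ?l" by (rule nth_mem)
    then obtain j where j: "j \<in> {1..<k}" "?l ! (i-1) = a (t,j)" by auto
    have "pts k a t i = a (t,j)" using False j by (simp add: pts_def)
    thus ?thesis using same[OF j(1)] by auto
  qed
  thus ?thesis unfolding payoff_def by simp
qed

lemma payoff_meas[measurable]: "(\<lambda>x. payoff k v a t x) \<in> borel_measurable borel"
  unfolding payoff_def by measurable


lemma summ_shift2: "summable (\<lambda>n. inverse (fact (n + 2)) * (y::real) ^ (n + 2))"
proof -
  have "summable (\<lambda>n. inverse (fact n) * y ^ n)"
    using summable_exp_generic[of y] by (simp add: scaleR_conv_of_real field_simps)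
  thus ?thesis using summable_iff_shift[of "\<lambda>n. inverse (fact n) * y ^ n" 2] by simp
qed

lemma exp_quad:
  fixes y :: real assumes "0 \<le> y" "y \<le> 1"
  shows "exp y \<le> 1 + y + (exp 1 - 2) * y\<^sup>2"
proof -
  have e1: "exp 1 - 2 = (\<Sum>n. inverse (fact (n + 2)) * (1::real) ^ (n + 2))"
    using exp_first_two_terms[of "1::real"] by simp
  have "(\<Sum>n. inverse (fact (n + 2)) * y ^ (n + 2)) \<le> (\<Sum>n. inverse (fact (n + 2)) * 1 ^ (n + 2) * y\<^sup>2)"
  proof (rule suminf_le)
    fix n
    have "y ^ (n+2) = y^n * y\<^sup>2" by (rule power_add)
    also have "\<dots> \<le> 1 * y\<^sup>2" using assms by (intro mult_right_mono power_le_one) auto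
    finally show "inverse (fact (n + 2)) * y ^ (n + 2) \<le> inverse (fact (n + 2)) * 1 ^ (n + 2) * y\<^sup>2"
      by (simp add: mult_left_mono)
  next
    show "summable (\<lambda>n. inverse (fact (n + 2)) * y ^ (n + 2))" by (rule summ_shift2)
    show "summable (\<lambda>n. inverse (fact (n + 2)) * 1 ^ (n + 2) * y\<^sup>2)"
      using summable_mult2[OF summ_shift2[of 1], of "y\<^sup>2"] by simp
  qed
  also have "\<dots> = (exp 1 - 2) * y\<^sup>2"
    unfolding e1 using suminf_mult2[OF summ_shift2[of 1], of "y\<^sup>2"] by simp
  finally show ?thesis using exp_first_two_terms[of y] by simp
qed

lemma integrable_ind_bounded:
  fixes G :: "real \<Rightarrow> real"
  assumes [measurable]: "G \<in> borel_measurable borel" and bnd: "\<And>x. 0 \<le> x \<Longrightarrow> x < 1 \<Longrightarrow> \<bar>G x\<bar> \<le> C"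
  shows "integrable lborel (\<lambda>x. indicator {0..<1} x * G x)"
proof (rule Bochner_Integration.integrable_bound)
  show "integrable lborel (\<lambda>x::real. indicator {0..<1} x * C)"
  proof -
    have "emeasure lborel {0..<1::real} = ennreal (1 - 0)" by (rule emeasure_lborel_Ico) simp
    hence ii: "integrable lborel (indicator {0..<1::real} :: real \<Rightarrow> real)"
      by (intro integrable_real_indicator) auto
    show ?thesis by (rule Bochner_Integration.integrable_mult_left) (rule ii)
  qed
  show "(\<lambda>x::real. indicator {0..<1} x * G x) \<in> borel_measurable lborel" by measurable
  show "AE x::real in lborel. norm (indicator {0..<1} x * G x) \<le> norm (indicator {0..<1} x * C)"
  proof (rule AE_I2)
    fix x
    have C: "0 \<le> C" using bnd[of 0] by auto
    show "norm (indicator {0..<1} x * G x) \<le> norm (indicator {0..<1} x * C)"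
      using bnd[of x] C by (auto simp: indicator_def)
  qed
qed

context
  fixes T k :: nat and v :: "nat \<Rightarrow> nat \<Rightarrow> real" and a :: "nat \<times> nat \<Rightarrow> real"
  assumes k1: "k \<ge> 1" and vals: "\<forall>t\<in>{1..T}. \<forall>i\<in>{1..k}. 0 \<le> v t i \<and> v t i \<le> 1"
begin

lemma payoff_bnd:
  assumes "t \<in> {1..T}" "0 \<le> x" "x < 1"
  shows "0 \<le> payoff k v a t x \<and> payoff k v a t x \<le> 1"
  using least_range[OF k1 assms(2,3), of a t] vals assms(1) unfolding payoff_def by blast

lemma cum_bnd:
  assumes "t \<le> Suc T" "0 \<le> x" "x < 1"
  shows "0 \<le> cum k v a t x \<and> cum k v a t x \<le> T"
proof -
  have "cum k v a t x \<le> (\<Sum>s\<in>{1..<t}. 1)" unfolding cum_def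
    using payoff_bnd assms by (intro sum_mono) auto
  also have "\<dots> \<le> T" using assms by simp
  finally show ?thesis unfolding cum_def using payoff_bnd assms by (auto intro: sum_nonneg)
qed

end

lemma cum_Suc: "t \<ge> 1 \<Longrightarrow> cum k v a (Suc t) x = cum k v a t x + payoff k v a t x"
  unfolding cum_def by (simp add: atLeastLessThanSuc)

lemma cum_meas[measurable]: "(\<lambda>x. cum k v a t x) \<in> borel_measurable borel"
  unfolding cum_def by measurable


context
  fixes T k :: nat and v :: "nat \<Rightarrow> nat \<Rightarrow> real" and a :: "nat \<times> nat \<Rightarrow> real" and \<eta> :: real
  assumes k1: "k \<ge> 1" and vals: "\<forall>t\<in>{1..T}. \<forall>i\<in>{1..k}. 0 \<le> v t i \<and> v t i \<le> 1"
    and eta0: "0 \<le> \<eta>"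
begin

abbreviation "f t x \<equiv> payoff k v a t x"
abbreviation "F t x \<equiv> cum k v a t x"
definition "W t = (\<integral>x. indicator {0..<1} x * exp (\<eta> * F t x) \<partial>lborel)"
definition "E t = (\<integral>x. indicator {0..<1} x * (exp (\<eta> * F t x) * f t x) \<partial>lborel)"
definition "m t = (\<integral>x. alg_density \<eta> k v a t x * f t x \<partial>lborel)"

lemma int_W: "t \<le> Suc T \<Longrightarrow> integrable lborel (\<lambda>x. indicator {0..<1} x * exp (\<eta> * F t x))"
  by (rule integrable_ind_bounded[where C="exp (\<eta> * T)"]) 
     (use cum_bnd[OF k1 vals] eta0 in \<open>auto intro!: mult_left_mono\<close>)

lemma int_E: "t \<in> {1..T} \<Longrightarrow> integrable lborel (\<lambda>x. indicator {0..<1} x * (exp (\<eta> * F t x) * f t x))"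
proof (rule integrable_ind_bounded[where C="exp (\<eta> * T)"])
  fix x :: real assume t: "t \<in> {1..T}" and x: "0 \<le> x" "x < 1"
  have "F t x \<le> T" using cum_bnd[OF k1 vals, of t x] t x by auto
  hence "exp (\<eta> * F t x) \<le> exp (\<eta> * T)" using eta0 by (auto intro!: mult_left_mono)
  moreover have "0 \<le> f t x \<and> f t x \<le> 1" using payoff_bnd[OF k1 vals t x] .
  ultimately show "\<bar>exp (\<eta> * F t x) * f t x\<bar> \<le> exp (\<eta> * T)"
    by (auto simp: abs_mult intro: mult_le_one order_trans[OF mult_right_le_one_le])
qed measurable

lemma W_ge1: assumes "t \<le> Suc T" shows "1 \<le> W t"
proof -
  have "(\<integral>x. indicator {0..<1::real} x * 1 \<partial>lborel) \<le> W t" unfolding W_def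
  proof (rule integral_mono[OF _ int_W[OF assms]])
    show "integrable lborel (\<lambda>x. indicator {0..<1::real} x * 1 :: real)"
      by (rule integrable_ind_bounded[where C=1]) auto
    fix x :: real
    show "indicator {0..<1} x * 1 \<le> indicator {0..<1} x * exp (\<eta> * F t x)"
      using cum_bnd[OF k1 vals assms, of x] eta0 by (auto simp: indicator_def)
  qed
  thus ?thesis by simp
qed

lemma W1: "W 1 = 1"
  unfolding W_def by (simp add: cum_def)

lemma m_eq: assumes "t \<in> {1..T}" shows "m t = E t / W t"
proof -
  have "m t = (\<integral>x. indicator {0..<1} x * (exp (\<eta> * F t x) * f t x) / W t \<partial>lborel)"
    unfolding m_def alg_density_def W_def by (intro Bochner_Integration.integral_cong) auto
  thus ?thesis unfolding E_def by simp
qed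

lemma W_step: assumes t: "t \<in> {1..T}" and eta1: "\<eta> \<le> 1"
  shows "W (Suc t) \<le> W t * exp (\<eta> * m t + (exp 1 - 2) * \<eta>\<^sup>2)"
proof -
  have tT: "t \<le> Suc T" using t by auto
  have pw: "indicator {0..<1} x * exp (\<eta> * F (Suc t) x) \<le>
      indicator {0..<1} x * exp (\<eta> * F t x) + \<eta> * (indicator {0..<1} x * (exp (\<eta> * F t x) * f t x))
      + (exp 1 - 2) * \<eta>\<^sup>2 * (indicator {0..<1} x * exp (\<eta> * F t x))" for x :: real
  proof (cases "0 \<le> x \<and> x < 1")
    case True
    have fb: "0 \<le> f t x \<and> f t x \<le> 1" using payoff_bnd[OF k1 vals t] True by auto
    have y: "0 \<le> \<eta> * f t x" "\<eta> * f t x \<le> 1" using fb eta0 eta1 by (auto intro: mult_le_one)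
    have "(f t x)\<^sup>2 \<le> 1" using fb by (intro power_le_one) auto
    hence sq: "(\<eta> * f t x)\<^sup>2 \<le> \<eta>\<^sup>2" unfolding power_mult_distrib
      by (intro mult_left_le) auto
    have e2: "0 \<le> exp 1 - (2::real)" using exp_ge_add_one_self[of 1] by simp
    have "exp (\<eta> * f t x) \<le> 1 + \<eta> * f t x + (exp 1 - 2) * (\<eta> * f t x)\<^sup>2" by (rule exp_quad[OF y])
    also have "\<dots> \<le> 1 + \<eta> * f t x + (exp 1 - 2) * \<eta>\<^sup>2" using sq e2 by (intro add_left_mono mult_left_mono)
    finally have "exp (\<eta> * F t x) * exp (\<eta> * f t x) \<le> exp (\<eta> * F t x) * (1 + \<eta> * f t x + (exp 1 - 2) * \<eta>\<^sup>2)"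
      by simp
    moreover have "exp (\<eta> * F (Suc t) x) = exp (\<eta> * F t x) * exp (\<eta> * f t x)"
      using t by (simp add: cum_Suc distrib_left exp_add)
    ultimately show ?thesis using True by (simp add: algebra_simps)
  next
    case False thus ?thesis by simp
  qed
  have "W (Suc t) \<le> (\<integral>x. indicator {0..<1} x * exp (\<eta> * F t x) + \<eta> * (indicator {0..<1} x * (exp (\<eta> * F t x) * f t x))
      + (exp 1 - 2) * \<eta>\<^sup>2 * (indicator {0..<1} x * exp (\<eta> * F t x)) \<partial>lborel)"
    unfolding W_def using t
    by (intro integral_mono pw int_W Bochner_Integration.integrable_add integrable_mult_right int_E) auto
  also have "\<dots> = W t + \<eta> * E t + (exp 1 - 2) * \<eta>\<^sup>2 * W t"
    unfolding W_def E_def using tT t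
    by (subst Bochner_Integration.integral_add; (intro Bochner_Integration.integrable_add integrable_mult_right int_W int_E)?; simp?)+
  also have "\<dots> = W t * (1 + (\<eta> * m t + (exp 1 - 2) * \<eta>\<^sup>2))"
    using m_eq[OF t] W_ge1[OF tT] by (simp add: field_simps)
  also have "\<dots> \<le> W t * exp (\<eta> * m t + (exp 1 - 2) * \<eta>\<^sup>2)"
    using W_ge1[OF tT] by (intro mult_left_mono exp_ge_add_one_self) auto
  finally show ?thesis .
qed

lemma W_tel: "\<eta> \<le> 1 \<Longrightarrow> n \<le> T \<Longrightarrow> W (Suc n) \<le> exp (\<eta> * (\<Sum>t=1..n. m t) + (exp 1 - 2) * \<eta>\<^sup>2 * n)"
proof (induction n)
  case 0 thus ?case using W1 by simp
next
  case (Suc n)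
  have "W (Suc (Suc n)) \<le> W (Suc n) * exp (\<eta> * m (Suc n) + (exp 1 - 2) * \<eta>\<^sup>2)"
    using W_step[of "Suc n"] Suc by auto
  also have "\<dots> \<le> exp (\<eta> * (\<Sum>t=1..n. m t) + (exp 1 - 2) * \<eta>\<^sup>2 * n) * exp (\<eta> * m (Suc n) + (exp 1 - 2) * \<eta>\<^sup>2)"
    using Suc by (intro mult_right_mono) auto
  also have "\<dots> = exp (\<eta> * (\<Sum>t=1..Suc n. m t) + (exp 1 - 2) * \<eta>\<^sup>2 * Suc n)"
    by (simp add: exp_add[symmetric] algebra_simps)
  finally show ?case .
qed

lemma W_lower:
  assumes c: "0 \<le> c" "0 < \<epsilon>" "c + \<epsilon> \<le> 1"
    and same: "\<And>y. c \<le> y \<Longrightarrow> y < c + \<epsilon> \<Longrightarrow> F (Suc T) y = Fx"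
  shows "\<epsilon> * exp (\<eta> * Fx) \<le> W (Suc T)"
proof -
  have "(\<integral>y. indicator {c..<c+\<epsilon>} y * exp (\<eta> * Fx) \<partial>lborel) \<le> W (Suc T)"
    unfolding W_def
  proof (rule integral_mono[OF _ int_W])
    show "integrable lborel (\<lambda>y. indicator {c..<c + \<epsilon>} y * exp (\<eta> * Fx))"
    proof -
      have "emeasure lborel {c..<c+\<epsilon>} = ennreal (c + \<epsilon> - c)" using c by (intro emeasure_lborel_Ico) auto
      hence "integrable lborel (indicator {c..<c+\<epsilon>} :: real \<Rightarrow> real)"
        by (intro integrable_real_indicator) auto
      thus ?thesis by (rule Bochner_Integration.integrable_mult_left)
    qed
    fix y :: real
    show "indicator {c..<c + \<epsilon>} y * exp (\<eta> * Fx) \<le> indicator {0..<1} y * exp (\<eta> * F (Suc T) y)"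
      using same[of y] c by (auto simp: indicator_def)
  qed simp
  thus ?thesis using c by simp
qed

end

lemma ad_meas[measurable]: "alg_density \<eta> k v a t \<in> borel_measurable borel"
  unfolding alg_density_def by measurable

context
  fixes T k :: nat and v :: "nat \<Rightarrow> nat \<Rightarrow> real" and a :: "nat \<times> nat \<Rightarrow> real" and \<eta> :: real
  assumes k1: "k \<ge> 1" and vals: "\<forall>t\<in>{1..T}. \<forall>i\<in>{1..k}. 0 \<le> v t i \<and> v t i \<le> 1"
    and eta0: "0 \<le> \<eta>"
begin

lemma ad_eq: "alg_density \<eta> k v a t x = indicator {0..<1} x * exp (\<eta> * cum k v a t x) / W k v a \<eta> t"
  by (simp add: alg_density_def W_def[OF k1 vals eta0])

lemma ad_nonneg: "t \<le> Suc T \<Longrightarrow> 0 \<le> alg_density \<eta> k v a t x"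
  unfolding ad_eq using W_ge1[OF k1 vals eta0, where a=a and t=t]
  by (auto simp: indicator_def)

lemma ad_int: "t \<le> Suc T \<Longrightarrow> integrable lborel (alg_density \<eta> k v a t)"
proof -
  assume t: "t \<le> Suc T"
  have "integrable lborel (\<lambda>x. indicator {0..<1} x * exp (\<eta> * cum k v a t x) / W k v a \<eta> t)"
    using int_W[OF k1 vals eta0 t] by simp
  thus ?thesis unfolding ad_eq by simp
qed

lemma ad_integral: "t \<le> Suc T \<Longrightarrow> (\<integral>x. alg_density \<eta> k v a t x \<partial>lborel) = 1"
proof -
  assume t: "t \<le> Suc T"
  have "(\<integral>x. alg_density \<eta> k v a t x \<partial>lborel) =
    (\<integral>x. indicator {0..<1} x * exp (\<eta> * cum k v a t x) / W k v a \<eta> t \<partial>lborel)"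
    unfolding ad_eq by simp
  also have "\<dots> = W k v a \<eta> t / W k v a \<eta> t" unfolding W_def[OF k1 vals eta0] by simp
  also have "\<dots> = 1" using W_ge1[OF k1 vals eta0 t, where a=a] by simp
  finally show ?thesis .
qed

lemma ad_prob: "t \<le> Suc T \<Longrightarrow> prob_space (density lborel (\<lambda>x. ennreal (alg_density \<eta> k v a t x)))"
proof -
  assume t: "t \<le> Suc T"
  have "(\<integral>\<^sup>+ x. ennreal (alg_density \<eta> k v a t x) \<partial>lborel) = ennreal (\<integral>x. alg_density \<eta> k v a t x \<partial>lborel)"
    using ad_int[OF t] ad_nonneg[OF t] by (intro nn_integral_eq_integral) auto
  thus ?thesis using ad_integral[OF t] by (intro prob_spaceI) (subst emeasure_density; simp)
qed


lemma comp_int: assumes t: "t \<in> {1..T}"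
  shows "integrable lborel (\<lambda>x. alg_density \<eta> k v a t x * payoff k v a t x)"
proof -
  have tT: "t \<le> Suc T" using t by auto
  have "integrable lborel (\<lambda>x. indicator {0..<1} x * (exp (\<eta> * cum k v a t x) * payoff k v a t x) / W k v a \<eta> t)"
    using int_E[OF k1 vals eta0 t] by simp
  thus ?thesis unfolding ad_eq by (simp add: field_simps)
qed

lemma alg_prob: "prob_space (alg_measure \<eta> k v T a)"
  unfolding alg_measure_def by (intro prob_space_PiM ad_prob) auto

lemma comp_integral: assumes t: "t \<in> {1..T}"
  shows "integrable (alg_measure \<eta> k v T a) (\<lambda>xs. payoff k v a t (xs t))"
    and "(\<integral>xs. payoff k v a t (xs t) \<partial>alg_measure \<eta> k v T a) = (\<integral>x. alg_density \<eta> k v a t x * payoff k v a t x \<partial>lborel)"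
proof -
  let ?M = "\<lambda>t. density lborel (\<lambda>x. ennreal (alg_density \<eta> k v a t x))"
  have tT: "t \<le> Suc T" using t by auto
  have pr: "\<And>i. i \<in> {1..T} \<Longrightarrow> prob_space (?M i)" by (intro ad_prob) auto
  have d: "distr (PiM {1..T} ?M) (?M t) (\<lambda>\<omega>. \<omega> t) = ?M t"
    by (rule distr_PiM_component[OF pr t])
  have ms: "(\<lambda>\<omega>. \<omega> t) \<in> measurable (PiM {1..T} ?M) (?M t)"
    using t by (rule measurable_component_singleton)
  have mf: "payoff k v a t \<in> borel_measurable (?M t)" by simp
  have nn: "AE x in lborel. 0 \<le> alg_density \<eta> k v a t x" using ad_nonneg[OF tT] by simp
  have "integrable (?M t) (payoff k v a t)"
    using comp_int[OF t] by (subst integrable_density) (use nn in auto)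
  hence "integrable (distr (PiM {1..T} ?M) (?M t) (\<lambda>\<omega>. \<omega> t)) (payoff k v a t)" using d by simp
  thus "integrable (alg_measure \<eta> k v T a) (\<lambda>xs. payoff k v a t (xs t))"
    unfolding alg_measure_def using integrable_distr_eq[OF ms mf] by simp
  have "(\<integral>xs. payoff k v a t (xs t) \<partial>alg_measure \<eta> k v T a) =
      (\<integral>x. payoff k v a t x \<partial>distr (PiM {1..T} ?M) (?M t) (\<lambda>\<omega>. \<omega> t))"
    unfolding alg_measure_def by (rule integral_distr[OF ms mf, symmetric])
  also have "\<dots> = (\<integral>x. payoff k v a t x \<partial>?M t)" using d by simp
  also have "\<dots> = (\<integral>x. alg_density \<eta> k v a t x * payoff k v a t x \<partial>lborel)"
    by (subst integral_density) (use nn in auto)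
  finally show "(\<integral>xs. payoff k v a t (xs t) \<partial>alg_measure \<eta> k v T a) = (\<integral>x. alg_density \<eta> k v a t x * payoff k v a t x \<partial>lborel)" .
qed

lemma inner_eq:
  "(\<integral>xs. regret T k v a xs \<partial>alg_measure \<eta> k v T a) =
     Max ((\<lambda>x. \<Sum>t=1..T. payoff k v a t x) ` {0..<1}) - (\<Sum>t=1..T. \<integral>x. alg_density \<eta> k v a t x * payoff k v a t x \<partial>lborel)"
proof -
  interpret P: prob_space "alg_measure \<eta> k v T a" by (rule alg_prob)
  show ?thesis unfolding regret_def
    using comp_integral
    by (subst Bochner_Integration.integral_diff) (auto simp: P.prob_space Bochner_Integration.integral_sum intro!: Bochner_Integration.integrable_sum)
qed

end

definition good :: "nat \<Rightarrow> nat \<Rightarrow> real \<Rightarrow> (nat \<times> nat \<Rightarrow> real) \<Rightarrow> bool" where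
  "good T k \<epsilon> a \<longleftrightarrow> (\<forall>p\<in>{1..T}\<times>{1..<k}. \<epsilon> \<le> a p \<and> a p \<le> 1 - \<epsilon>) \<and>
     (\<forall>p\<in>{1..T}\<times>{1..<k}. \<forall>q\<in>{1..T}\<times>{1..<k}. p \<noteq> q \<longrightarrow> \<not> (a p \<le> a q \<and> a q < a p + \<epsilon>))"

lemma cell:
  assumes g: "good T k \<epsilon> a" and e: "0 < \<epsilon>" "\<epsilon> \<le> 1" and x: "0 \<le> x" "x < 1"
  shows "\<exists>c. 0 \<le> c \<and> c + \<epsilon> \<le> 1 \<and> (\<forall>y. c \<le> y \<and> y < c + \<epsilon> \<longrightarrow> cum k v a (Suc T) y = cum k v a (Suc T) x)"
proof -
  let ?I = "{1..T}\<times>{1..<k}"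
  define P where "P = {p\<in>?I. a p \<le> x}"
  define c where "c = (if P = {} then 0 else Max (a ` P))"
  have g1: "\<forall>p\<in>?I. \<epsilon> \<le> a p \<and> a p \<le> 1 - \<epsilon>" using g unfolding good_def by (rule conjunct1)
  have g2: "\<forall>p\<in>?I. \<forall>q\<in>?I. p \<noteq> q \<longrightarrow> \<not> (a p \<le> a q \<and> a q < a p + \<epsilon>)"
    using g unfolding good_def by (rule conjunct2)
  have finP: "finite P" unfolding P_def by (rule finite_subset[of _ ?I]) auto
  have big: "0 \<le> c \<and> c \<le> x \<and> c + \<epsilon> \<le> 1 \<and> (\<forall>q y. q \<in> ?I \<longrightarrow> c \<le> y \<longrightarrow> y < c + \<epsilon> \<longrightarrow> (a q \<le> x \<longleftrightarrow> a q \<le> y))"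
    proof (cases "P = {}")
      case True
      hence c: "c = 0" unfolding c_def by simp
      have "\<forall>q y. q \<in> ?I \<longrightarrow> c \<le> y \<longrightarrow> y < c + \<epsilon> \<longrightarrow> (a q \<le> x \<longleftrightarrow> a q \<le> y)"
      proof (intro allI impI)
        fix q y assume q: "q \<in> ?I" and y: "c \<le> y" "y < c + \<epsilon>"
        have "\<not> a q \<le> x" using True q unfolding P_def by auto
        moreover have "\<epsilon> \<le> a q" using bspec[OF g1 q] by (rule conjunct1)
        ultimately show "a q \<le> x \<longleftrightarrow> a q \<le> y" using y c by auto
      qed
      thus "0 \<le> c \<and> c \<le> x \<and> c + \<epsilon> \<le> 1 \<and> (\<forall>q y. q \<in> ?I \<longrightarrow> c \<le> y \<longrightarrow> y < c + \<epsilon> \<longrightarrow> (a q \<le> x \<longleftrightarrow> a q \<le> y))"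
        using c x e by simp
    next
      case False
      hence cm: "c = Max (a ` P)" unfolding c_def by simp
      have "Max (a ` P) \<in> a ` P" by (rule Max_in) (use finP False in auto)
      then obtain p0 where p0: "p0 \<in> P" "c = a p0" using cm by blast
      have ub: "\<And>q. q \<in> P \<Longrightarrow> a q \<le> c" unfolding cm by (rule Max_ge) (use finP in auto)
      have p0I: "p0 \<in> ?I" "a p0 \<le> x" using p0 unfolding P_def by auto
      have "\<forall>q y. q \<in> ?I \<longrightarrow> c \<le> y \<longrightarrow> y < c + \<epsilon> \<longrightarrow> (a q \<le> x \<longleftrightarrow> a q \<le> y)"
      proof (intro allI impI)
        fix q y assume q: "q \<in> ?I" and y: "c \<le> y" "y < c + \<epsilon>"
        show "a q \<le> x \<longleftrightarrow> a q \<le> y"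
        proof
          assume "a q \<le> x" hence "q \<in> P" using q unfolding P_def by auto
          thus "a q \<le> y" using ub[of q] y by linarith
        next
          assume qy: "a q \<le> y"
          show "a q \<le> x"
          proof (cases "q = p0")
            case True thus ?thesis using p0I by simp
          next
            case False
            have "\<not> (a p0 \<le> a q \<and> a q < a p0 + \<epsilon>)" using bspec[OF bspec[OF g2 p0I(1)] q] False by simp
            hence "a q < a p0" using qy y p0 by auto
            thus ?thesis using p0I by simp
          qed
        qed
      qed
      moreover have "\<epsilon> \<le> a p0 \<and> a p0 \<le> 1 - \<epsilon>" using bspec[OF g1 p0I(1)] .
      hence "0 \<le> c" "c + \<epsilon> \<le> 1" using p0 e by auto
      ultimately show "0 \<le> c \<and> c \<le> x \<and> c + \<epsilon> \<le> 1 \<and> (\<forall>q y. q \<in> ?I \<longrightarrow> c \<le> y \<longrightarrow> y < c + \<epsilon> \<longrightarrow> (a q \<le> x \<longleftrightarrow> a q \<le> y))"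
        using p0I p0 by simp
    qed
  have c0: "0 \<le> c" and cx: "c \<le> x" and c1: "c + \<epsilon> \<le> 1" using big by blast+
  have key: "\<And>q y. q \<in> ?I \<Longrightarrow> c \<le> y \<Longrightarrow> y < c + \<epsilon> \<Longrightarrow> (a q \<le> x \<longleftrightarrow> a q \<le> y)"
    using big by blast
  have "\<forall>y. c \<le> y \<and> y < c + \<epsilon> \<longrightarrow> cum k v a (Suc T) y = cum k v a (Suc T) x"
  proof (intro allI impI)
    fix y assume y: "c \<le> y \<and> y < c + \<epsilon>"
    have "payoff k v a t y = payoff k v a t x" if t: "t \<in> {1..<Suc T}" for t
    proof (rule payoff_const)
      show "0 \<le> y" "y < 1" using y c0 c1 by linarith+
      show "0 \<le> x" "x < 1" by (fact x)+
      fix j assume j: "j \<in> {1..<k}"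
      have "(t, j) \<in> ?I" using t j by auto
      from key[OF this, of y] y show "a (t, j) \<le> y \<longleftrightarrow> a (t, j) \<le> x" by blast
    qed
    thus "cum k v a (Suc T) y = cum k v a (Suc T) x" unfolding cum_def by (intro sum.cong) auto
  qed
  thus ?thesis using c0 c1 by blast
qed


context
  fixes T k :: nat and v :: "nat \<Rightarrow> nat \<Rightarrow> real" and a :: "nat \<times> nat \<Rightarrow> real" and \<eta> :: real
  assumes k1: "k \<ge> 1" and vals: "\<forall>t\<in>{1..T}. \<forall>i\<in>{1..k}. 0 \<le> v t i \<and> v t i \<le> 1"
    and eta0: "0 \<le> \<eta>"
begin

lemma fin_S: "finite ((\<lambda>x. \<Sum>t=1..T. payoff k v a t x) ` {0..<1})"
proof (rule finite_subset)
  show "finite ((\<lambda>h. \<Sum>t=1..T. v t (h t)) ` ({1..T} \<rightarrow>\<^sub>E {1..k}))" by (intro finite_imageI finite_PiE) auto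
  show "(\<lambda>x. \<Sum>t=1..T. payoff k v a t x) ` {0..<1} \<subseteq> (\<lambda>h. \<Sum>t=1..T. v t (h t)) ` ({1..T} \<rightarrow>\<^sub>E {1..k})"
  proof
    fix z assume "z \<in> (\<lambda>x. \<Sum>t=1..T. payoff k v a t x) ` {0..<1}"
    then obtain x where x: "0 \<le> x" "x < 1" "z = (\<Sum>t=1..T. payoff k v a t x)" by auto
    let ?h = "\<lambda>t\<in>{1..T}. LEAST i. x < pts k a t i"
    have "?h \<in> {1..T} \<rightarrow>\<^sub>E {1..k}" using least_range[OF k1 x(1,2)] by auto
    moreover have "z = (\<Sum>t=1..T. v t (?h t))" unfolding x payoff_def by (intro sum.cong) auto
    ultimately show "z \<in> (\<lambda>h. \<Sum>t=1..T. v t (h t)) ` ({1..T} \<rightarrow>\<^sub>E {1..k})" by blast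
  qed
qed

lemma m_nonneg: "t \<in> {1..T} \<Longrightarrow> 0 \<le> (\<integral>x. alg_density \<eta> k v a t x * payoff k v a t x \<partial>lborel)"
proof -
  assume t: "t \<in> {1..T}"
  hence tT: "t \<le> Suc T" by auto
  show ?thesis
  proof (rule integral_nonneg_AE, rule AE_I2)
    fix x
    show "0 \<le> alg_density \<eta> k v a t x * payoff k v a t x"
    proof (cases "0 \<le> x \<and> x < 1")
      case True thus ?thesis using ad_nonneg[OF k1 vals eta0 tT] payoff_bnd[OF k1 vals t] by auto
    next
      case False thus ?thesis unfolding ad_eq[OF k1 vals eta0] by simp
    qed
  qed
qed

lemma inner_le_T: "(\<integral>xs. regret T k v a xs \<partial>alg_measure \<eta> k v T a) \<le> T"
proof -
  have "Max ((\<lambda>x. \<Sum>t=1..T. payoff k v a t x) ` {0..<1}) \<le> T"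
  proof -
    have "\<forall>x\<in>{0..<1::real}. (\<Sum>t=1..T. payoff k v a t x) \<le> T"
    proof
      fix x :: real assume "x \<in> {0..<1}" hence x: "0 \<le> x" "x < 1" by auto
      have "(\<Sum>t=1..T. payoff k v a t x) \<le> (\<Sum>t=1..T. 1)" using payoff_bnd[OF k1 vals _ x] by (intro sum_mono) auto
      thus "(\<Sum>t=1..T. payoff k v a t x) \<le> T" by simp
    qed
    thus ?thesis using fin_S by (subst Max_le_iff) auto
  qed
  moreover have "0 \<le> (\<Sum>t=1..T. \<integral>x. alg_density \<eta> k v a t x * payoff k v a t x \<partial>lborel)"
    using m_nonneg by (intro sum_nonneg) auto
  ultimately show ?thesis unfolding inner_eq[OF k1 vals eta0] by linarith
qed

lemma inner_le_hedge:
  assumes g: "good T k \<epsilon> a" and e: "0 < \<epsilon>" "\<epsilon> \<le> 1" and eta: "0 < \<eta>" "\<eta> \<le> 1"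
  shows "(\<integral>xs. regret T k v a xs \<partial>alg_measure \<eta> k v T a) \<le> (ln (1/\<epsilon>) + (exp 1 - 2) * \<eta>\<^sup>2 * T) / \<eta>"
proof -
  let ?m = "\<Sum>t=1..T. \<integral>x. alg_density \<eta> k v a t x * payoff k v a t x \<partial>lborel"
  have msum: "?m = (\<Sum>t=1..T. m k v a \<eta> t)" unfolding m_def[OF k1 vals eta0] ..
  have "Max ((\<lambda>x. \<Sum>t=1..T. payoff k v a t x) ` {0..<1}) \<le> ?m + (ln (1/\<epsilon>) + (exp 1 - 2) * \<eta>\<^sup>2 * T) / \<eta>"
  proof -
  have "\<forall>x\<in>{0..<1::real}. (\<Sum>t=1..T. payoff k v a t x) \<le> ?m + (ln (1/\<epsilon>) + (exp 1 - 2) * \<eta>\<^sup>2 * T) / \<eta>"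
  proof
    fix x :: real assume "x \<in> {0..<1}" hence x: "0 \<le> x" "x < 1" by auto
    let ?Fx = "cum k v a (Suc T) x"
    have Fx: "?Fx = (\<Sum>t=1..T. payoff k v a t x)" unfolding cum_def by (intro sum.cong) auto
    obtain c where c: "0 \<le> c" "c + \<epsilon> \<le> 1" "\<forall>y. c \<le> y \<and> y < c + \<epsilon> \<longrightarrow> cum k v a (Suc T) y = ?Fx"
      using cell[OF g e x] by blast
    have "\<epsilon> * exp (\<eta> * ?Fx) \<le> W k v a \<eta> (Suc T)"
      using c e by (intro W_lower[OF k1 vals eta0]) auto
    also have "\<dots> \<le> exp (\<eta> * ?m + (exp 1 - 2) * \<eta>\<^sup>2 * T)"
      unfolding msum using W_tel[OF k1 vals eta0 eta(2), of T] by simp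
    finally have "ln (\<epsilon> * exp (\<eta> * ?Fx)) \<le> \<eta> * ?m + (exp 1 - 2) * \<eta>\<^sup>2 * T"
      using e by (subst (asm) ln_le_cancel_iff[symmetric]) auto
    hence "\<eta> * ?Fx \<le> \<eta> * ?m + (ln (1/\<epsilon>) + (exp 1 - 2) * \<eta>\<^sup>2 * T)"
      using e by (simp add: ln_mult ln_div)
    hence "(?Fx - ?m) * \<eta> \<le> ln (1/\<epsilon>) + (exp 1 - 2) * \<eta>\<^sup>2 * T"
      by (simp add: algebra_simps)
    hence "?Fx - ?m \<le> (ln (1/\<epsilon>) + (exp 1 - 2) * \<eta>\<^sup>2 * T) / \<eta>"
      using eta by (simp add: pos_le_divide_eq)
    hence "?Fx \<le> ?m + (ln (1/\<epsilon>) + (exp 1 - 2) * \<eta>\<^sup>2 * T) / \<eta>"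
      by simp
    thus "(\<Sum>t=1..T. payoff k v a t x) \<le> ?m + (ln (1/\<epsilon>) + (exp 1 - 2) * \<eta>\<^sup>2 * T) / \<eta>" using Fx by simp
  qed
    thus ?thesis using fin_S by (subst Max_le_iff) auto
  qed
  thus ?thesis unfolding inner_eq[OF k1 vals eta0] by linarith
qed

end

lemma dens_bound:
  fixes g :: "real \<Rightarrow> real"
  assumes [measurable]: "g \<in> borel_measurable borel" and b: "\<And>x. 0 \<le> g x \<and> g x \<le> \<sigma>"
    and A[measurable]: "A \<in> sets borel" and C[measurable]: "C \<in> sets borel" and AC: "\<And>x. x \<in> A \<Longrightarrow> g x \<noteq> 0 \<Longrightarrow> x \<in> C"
  shows "emeasure (density lborel g) A \<le> ennreal \<sigma> * emeasure lborel C"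
proof -
  have "emeasure (density lborel g) A = (\<integral>\<^sup>+ x. ennreal (g x) * indicator A x \<partial>lborel)"
    by (subst emeasure_density) auto
  also have "\<dots> \<le> (\<integral>\<^sup>+ x. ennreal \<sigma> * indicator C x \<partial>lborel)"
  proof (rule nn_integral_mono)
    fix x
    show "ennreal (g x) * indicator A x \<le> ennreal \<sigma> * indicator C x"
      using b[of x] AC[of x] by (cases "x \<in> A"; cases "x \<in> C"; cases "g x = 0") (auto simp: indicator_def)
  qed
  also have "\<dots> = ennreal \<sigma> * emeasure lborel C" by (rule nn_integral_cmult_indicator) simp
  finally show ?thesis .
qed

lemma comp_emeasure:
  assumes MM: "\<And>i. i \<in> I \<Longrightarrow> prob_space (M i)" and pI: "p \<in> I" and A: "A \<in> sets (M p)"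
  shows "emeasure (PiM I M) {\<omega>\<in>space (PiM I M). \<omega> p \<in> A} = emeasure (M p) A"
proof -
  have "emeasure (PiM I M) {\<omega>\<in>space (PiM I M). \<omega> p \<in> A} = emeasure (distr (PiM I M) (M p) (\<lambda>\<omega>. \<omega> p)) A"
    using pI A by (subst emeasure_distr) (auto intro: measurable_component_singleton simp: Int_def conj_commute)
  also have "\<dots> = emeasure (M p) A" using distr_PiM_component[of I M p, OF MM pI] by simp
  finally show ?thesis .
qed

lemma pair_distr:
  assumes MM: "\<And>i. i \<in> I \<Longrightarrow> prob_space (M i)" and pI: "p \<in> I" and qI: "q \<in> I" and pq: "p \<noteq> q"
  shows "distr (PiM I M) (M p \<Otimes>\<^sub>M M q) (\<lambda>\<omega>. (\<omega> p, \<omega> q)) = M p \<Otimes>\<^sub>M M q"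
proof (rule pair_measure_eqI[symmetric])
  interpret Mp: prob_space "M p" using MM pI by blast
  interpret Mq: prob_space "M q" using MM qI by blast
  show "sigma_finite_measure (M p)" "sigma_finite_measure (M q)" by unfold_locales
  show "sets (M p \<Otimes>\<^sub>M M q) = sets (distr (PiM I M) (M p \<Otimes>\<^sub>M M q) (\<lambda>\<omega>. (\<omega> p, \<omega> q)))" by simp
  fix A B assume A: "A \<in> sets (M p)" and B: "B \<in> sets (M q)"
  define X where "X = (\<lambda>i. if i = p then A else B)"
  have meas: "(\<lambda>\<omega>. (\<omega> p, \<omega> q)) \<in> measurable (PiM I M) (M p \<Otimes>\<^sub>M M q)"
    using pI qI by (intro measurable_Pair measurable_component_singleton)
  have "(\<lambda>\<omega>. (\<omega> p, \<omega> q)) -` (A \<times> B) \<inter> space (PiM I M) = prod_emb I M {p, q} (Pi\<^sub>E {p, q} X)"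
  proof (intro set_eqI iffI)
    fix \<omega> assume "\<omega> \<in> (\<lambda>\<omega>. (\<omega> p, \<omega> q)) -` (A \<times> B) \<inter> space (PiM I M)"
    hence w: "\<omega> p \<in> A" "\<omega> q \<in> B" "\<omega> \<in> space (PiM I M)" by auto
    have "restrict \<omega> {p, q} \<in> Pi\<^sub>E {p, q} X" using w pq unfolding X_def by (auto simp: PiE_iff)
    thus "\<omega> \<in> prod_emb I M {p, q} (Pi\<^sub>E {p, q} X)" using w(3) unfolding prod_emb_def space_PiM by blast
  next
    fix \<omega> assume "\<omega> \<in> prod_emb I M {p, q} (Pi\<^sub>E {p, q} X)"
    hence w: "restrict \<omega> {p, q} \<in> Pi\<^sub>E {p, q} X" "\<omega> \<in> space (PiM I M)" unfolding prod_emb_def space_PiM by auto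
    have "\<omega> p \<in> X p" "\<omega> q \<in> X q" using w(1) unfolding PiE_iff by auto
    hence "\<omega> p \<in> A" "\<omega> q \<in> B" using pq unfolding X_def by auto
    thus "\<omega> \<in> (\<lambda>\<omega>. (\<omega> p, \<omega> q)) -` (A \<times> B) \<inter> space (PiM I M)" using w(2) by blast
  qed
  hence "emeasure (distr (PiM I M) (M p \<Otimes>\<^sub>M M q) (\<lambda>\<omega>. (\<omega> p, \<omega> q))) (A \<times> B) =
      emeasure (PiM I M) (prod_emb I M {p, q} (Pi\<^sub>E {p, q} X))"
    using A B by (subst emeasure_distr[OF meas]) auto
  also have "\<dots> = (\<Prod>i\<in>{p,q}. emeasure (M i) (X i))"
    using pI qI A B by (intro emeasure_PiM_emb MM) (auto simp: X_def)
  also have "\<dots> = emeasure (M p) A * emeasure (M q) B" using pq by (simp add: X_def)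
  finally show "emeasure (M p) A * emeasure (M q) B = emeasure (distr (PiM I M) (M p \<Otimes>\<^sub>M M q) (\<lambda>\<omega>. (\<omega> p, \<omega> q))) (A \<times> B)" ..
qed

lemma pair_emeasure:
  assumes MM: "\<And>i. i \<in> I \<Longrightarrow> prob_space (M i)" and pI: "p \<in> I" and qI: "q \<in> I" and pq: "p \<noteq> q"
    and S: "S \<in> sets (M p \<Otimes>\<^sub>M M q)"
  shows "emeasure (PiM I M) {\<omega>\<in>space (PiM I M). (\<omega> p, \<omega> q) \<in> S} = emeasure (M p \<Otimes>\<^sub>M M q) S"
proof -
  have meas: "(\<lambda>\<omega>. (\<omega> p, \<omega> q)) \<in> measurable (PiM I M) (M p \<Otimes>\<^sub>M M q)"
    using pI qI by (intro measurable_Pair measurable_component_singleton)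
  have "emeasure (PiM I M) {\<omega>\<in>space (PiM I M). (\<omega> p, \<omega> q) \<in> S} = emeasure (distr (PiM I M) (M p \<Otimes>\<^sub>M M q) (\<lambda>\<omega>. (\<omega> p, \<omega> q))) S"
    using S by (subst emeasure_distr[OF meas]) (auto simp: Int_def conj_commute)
  also have "\<dots> = emeasure (M p \<Otimes>\<^sub>M M q) S" using pair_distr[of I M p q, OF MM pI qI pq] by simp
  finally show ?thesis .
qed


lemma e_ge: "exp 1 - 2 \<ge> (1/2::real)"
proof -
  have "exp 1 - 2 = (\<Sum>n. inverse (fact (n + 2)) * (1::real) ^ (n + 2))"
    using exp_first_two_terms[of "1::real"] by simp
  moreover have "(\<Sum>n\<in>{0}. inverse (fact (n + 2)) * (1::real) ^ (n + 2)) \<le> (\<Sum>n. inverse (fact (n + 2)) * (1::real) ^ (n + 2))"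
    by (rule sum_le_suminf[OF summ_shift2]) auto
  ultimately show ?thesis by (simp add: fact_numeral)
qed

lemma int_le_const:
  fixes hh :: "'a \<Rightarrow> real" and cc :: real
  assumes "prob_space M" and "\<And>x. x \<in> space M \<Longrightarrow> hh x \<le> cc" and "0 \<le> cc"
  shows "(\<integral>x. hh x \<partial>M) \<le> cc"
proof (cases "integrable M hh")
  case True
  interpret prob_space M by fact
  have "(\<integral>x. hh x \<partial>M) \<le> (\<integral>x. cc \<partial>M)" by (rule integral_mono) (use True assms in auto)
  thus ?thesis by (simp add: prob_space)
next
  case False thus ?thesis using assms by (simp add: not_integrable_integral_eq)
qed

lemma inner_k1:
  assumes vals: "\<forall>t\<in>{1..T}. \<forall>i\<in>{1..1}. 0 \<le> v t i \<and> v t i \<le> 1" and eta0: "0 \<le> \<eta>"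
  shows "(\<integral>xs. regret T 1 v a xs \<partial>alg_measure \<eta> 1 v T a) = 0"
proof -
  have k1: "(1::nat) \<ge> 1" by simp
  have pf: "payoff 1 v a t x = v t 1" if "0 \<le> x" "x < 1" for t x
    using least_range[OF k1 that, of a t] unfolding payoff_def by simp
  have S: "(\<lambda>x. \<Sum>t=1..T. payoff 1 v a t x) ` {0..<1} = {\<Sum>t=1..T. v t 1}"
  proof -
    have "(\<lambda>x. \<Sum>t=1..T. payoff 1 v a t x) ` {0..<1} = (\<lambda>x. \<Sum>t=1..T. v t 1) ` {0..<(1::real)}"
      using pf by (intro image_cong) auto
    also have "\<dots> = {\<Sum>t=1..T. v t 1}" by (rule image_constant[of 0]) simp
    finally show ?thesis .
  qed
  have m: "(\<integral>x. alg_density \<eta> 1 v a t x * payoff 1 v a t x \<partial>lborel) = v t 1" if t: "t \<in> {1..T}" for t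
  proof -
    have tT: "t \<le> Suc T" using t by auto
    have "(\<integral>x. alg_density \<eta> 1 v a t x * payoff 1 v a t x \<partial>lborel) = (\<integral>x. alg_density \<eta> 1 v a t x * v t 1 \<partial>lborel)"
    proof (rule Bochner_Integration.integral_cong[OF refl])
      fix x show "alg_density \<eta> 1 v a t x * payoff 1 v a t x = alg_density \<eta> 1 v a t x * v t 1"
      proof (cases "0 \<le> x \<and> x < 1")
        case True thus ?thesis using pf[of x t] by simp
      next
        case False thus ?thesis unfolding ad_eq[OF k1 vals eta0] by simp
      qed
    qed
    also have "\<dots> = v t 1" using ad_integral[OF k1 vals eta0 tT] by simp
    finally show ?thesis .
  qed
  have "(\<Sum>t=1..T. \<integral>x. alg_density \<eta> 1 v a t x * payoff 1 v a t x \<partial>lborel) = (\<Sum>t=1..T. v t 1)"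
    by (intro sum.cong refl m)
  thus ?thesis unfolding inner_eq[OF k1 vals eta0] S by simp
qed


lemma bad_bound:
  fixes g :: "nat \<Rightarrow> nat \<Rightarrow> real \<Rightarrow> real" and \<sigma> \<epsilon> :: real
  assumes dens: "\<forall>t\<in>{1..T}. \<forall>i\<in>{1..<k}.
         g t i \<in> borel_measurable borel \<and>
         (\<forall>x. 0 \<le> g t i x \<and> g t i x \<le> \<sigma>) \<and>
         (\<forall>x. x \<notin> {0<..<1} \<longrightarrow> g t i x = 0) \<and>
         prob_space (density lborel (\<lambda>x. ennreal (g t i x)))"
    and e: "0 < \<epsilon>" and s: "0 \<le> \<sigma>"
  shows "{a \<in> space (nature_measure T k g). \<not> good T k \<epsilon> a} \<in> sets (nature_measure T k g)"
    and "measure (nature_measure T k g) {a \<in> space (nature_measure T k g). \<not> good T k \<epsilon> a}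
          \<le> \<sigma> * \<epsilon> * (real (card ({1..T}\<times>{1..<k}))^2 + real (card ({1..T}\<times>{1..<k})))"
proof -
  define I where "I = {1..T}\<times>{1..<k}"
  define Mn where "Mn = (\<lambda>(t, i). density lborel (\<lambda>x. ennreal (g t i x)))"
  define NM where "NM = nature_measure T k g"
  have NM: "NM = PiM I Mn" unfolding NM_def nature_measure_def I_def Mn_def ..
  have finI: "finite I" unfolding I_def by simp
  have gp: "g (fst p) (snd p) \<in> borel_measurable borel \<and> (\<forall>x. 0 \<le> g (fst p) (snd p) x \<and> g (fst p) (snd p) x \<le> \<sigma>) \<and>
      (\<forall>x. x \<notin> {0<..<1} \<longrightarrow> g (fst p) (snd p) x = 0) \<and> prob_space (Mn p)" if "p \<in> I" for p
    using that dens unfolding I_def Mn_def by (cases p) auto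
  have MM: "\<And>p. p \<in> I \<Longrightarrow> prob_space (Mn p)" using gp by blast
  have Mnp: "Mn p = density lborel (\<lambda>x. ennreal (g (fst p) (snd p) x))" for p
    unfolding Mn_def by (cases p) simp
  have setsMn: "sets (Mn p) = sets borel" for p unfolding Mnp by simp
  interpret P: prob_space NM unfolding NM by (rule prob_space_PiM[OF MM])
  have comp[measurable]: "(\<lambda>a. a p) \<in> borel_measurable NM" if "p \<in> I" for p
  proof -
    have "(\<lambda>a. a p) \<in> measurable NM (Mn p)" unfolding NM using that by (rule measurable_component_singleton)
    thus ?thesis using measurable_cong_sets[OF refl setsMn] by blast
  qed
  define C1 where "C1 = {x::real. \<not> (\<epsilon> \<le> x \<and> x \<le> 1 - \<epsilon>)}"
  define S where "S = {(x::real, y::real). x \<le> y \<and> y < x + \<epsilon>}"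
  define E1 where "E1 p = {a \<in> space NM. a p \<in> C1}" for p
  define E2 where "E2 p q = {a \<in> space NM. (a p, a q) \<in> S}" for p q
  have C1b[measurable]: "C1 \<in> sets borel" unfolding C1_def by measurable
  have Sb: "S \<in> sets (borel \<Otimes>\<^sub>M borel)"
  proof -
    have m: "(\<lambda>z::real\<times>real. snd z - fst z) \<in> borel_measurable (borel \<Otimes>\<^sub>M borel)" by measurable
    have "S = (\<lambda>z::real\<times>real. snd z - fst z) -` {0..<\<epsilon>} \<inter> space (borel \<Otimes>\<^sub>M borel)"
      unfolding S_def by (auto simp: space_pair_measure)
    thus ?thesis using measurable_sets[OF m] by simp
  qed
  have E1s: "E1 p \<in> sets NM" if "p \<in> I" for p
  proof -
    have "E1 p = (\<lambda>a. a p) -` C1 \<inter> space NM" unfolding E1_def by auto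
    thus ?thesis using measurable_sets[OF comp[OF that] C1b] by simp
  qed
  have E2s: "E2 p q \<in> sets NM" if "p \<in> I" "q \<in> I" for p q
  proof -
    have m: "(\<lambda>a. (a p, a q)) \<in> measurable NM (borel \<Otimes>\<^sub>M borel)"
      using comp[OF that(1)] comp[OF that(2)] by (rule measurable_Pair)
    have "E2 p q = (\<lambda>a. (a p, a q)) -` S \<inter> space NM" unfolding E2_def by auto
    thus ?thesis using measurable_sets[OF m Sb] by simp
  qed
  have Bad_eq: "{a \<in> space NM. \<not> good T k \<epsilon> a} = (\<Union>p\<in>I. E1 p) \<union> (\<Union>p\<in>I. \<Union>q\<in>I-{p}. E2 p q)"
  proof -
    have goodI: "good T k \<epsilon> a = ((\<forall>p\<in>I. \<epsilon> \<le> a p \<and> a p \<le> 1 - \<epsilon>) \<and>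
      (\<forall>p\<in>I. \<forall>q\<in>I. p \<noteq> q \<longrightarrow> \<not> (a p \<le> a q \<and> a q < a p + \<epsilon>)))" for a
      unfolding good_def I_def ..
    show ?thesis
    proof (intro set_eqI iffI)
      fix a assume "a \<in> {a \<in> space NM. \<not> good T k \<epsilon> a}"
      hence sp: "a \<in> space NM" and ng: "\<not> good T k \<epsilon> a" by auto
      show "a \<in> (\<Union>p\<in>I. E1 p) \<union> (\<Union>p\<in>I. \<Union>q\<in>I-{p}. E2 p q)"
      proof (cases "\<forall>p\<in>I. \<epsilon> \<le> a p \<and> a p \<le> 1 - \<epsilon>")
        case True
        with ng goodI obtain p q where "p \<in> I" "q \<in> I" "p \<noteq> q" "a p \<le> a q \<and> a q < a p + \<epsilon>" by auto
        hence "a \<in> E2 p q" "q \<in> I - {p}" using sp unfolding E2_def S_def by auto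
        thus ?thesis using \<open>p \<in> I\<close> by blast
      next
        case False
        then obtain p where "p \<in> I" "\<not> (\<epsilon> \<le> a p \<and> a p \<le> 1 - \<epsilon>)" by auto
        hence "a \<in> E1 p" using sp unfolding E1_def C1_def by auto
        thus ?thesis using \<open>p \<in> I\<close> by blast
      qed
    next
      fix a assume a: "a \<in> (\<Union>p\<in>I. E1 p) \<union> (\<Union>p\<in>I. \<Union>q\<in>I-{p}. E2 p q)"
      show "a \<in> {a \<in> space NM. \<not> good T k \<epsilon> a}"
      proof (cases "a \<in> (\<Union>p\<in>I. E1 p)")
        case True
        then obtain p where "p \<in> I" "a \<in> E1 p" by auto
        hence "a \<in> space NM" "\<not> (\<epsilon> \<le> a p \<and> a p \<le> 1 - \<epsilon>)" unfolding E1_def C1_def by auto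
        thus ?thesis using \<open>p \<in> I\<close> goodI by auto
      next
        case False
        with a obtain p q where pq: "p \<in> I" "q \<in> I - {p}" "a \<in> E2 p q" by auto
        hence "a \<in> space NM" "a p \<le> a q \<and> a q < a p + \<epsilon>" unfolding E2_def S_def by auto
        moreover have "q \<in> I" "p \<noteq> q" using pq by auto
        ultimately show ?thesis using \<open>p \<in> I\<close> goodI by auto
      qed
    qed
  qed
  show "{a \<in> space (nature_measure T k g). \<not> good T k \<epsilon> a} \<in> sets (nature_measure T k g)"
    unfolding NM_def[symmetric] Bad_eq using E1s E2s finI by auto
  have mE1: "measure NM (E1 p) \<le> 2 * \<sigma> * \<epsilon>" if p: "p \<in> I" for p
  proof -
    have "emeasure NM (E1 p) = emeasure (Mn p) C1"
      unfolding E1_def NM using comp_emeasure[of I Mn p C1, OF MM p] setsMn by simp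
    also have "\<dots> \<le> ennreal \<sigma> * emeasure lborel ({0..\<epsilon>} \<union> {1-\<epsilon>..1})"
      unfolding Mnp
    proof (rule dens_bound)
      show "g (fst p) (snd p) \<in> borel_measurable borel" "\<And>x. 0 \<le> g (fst p) (snd p) x \<and> g (fst p) (snd p) x \<le> \<sigma>"
        using gp[OF p] by auto
      fix x assume "x \<in> C1" "g (fst p) (snd p) x \<noteq> 0"
      hence x1: "\<not> (\<epsilon> \<le> x \<and> x \<le> 1 - \<epsilon>)" and gx: "g (fst p) (snd p) x \<noteq> 0" unfolding C1_def by auto
      have "x \<in> {0<..<1}" using gx gp[OF p] by blast
      thus "x \<in> {0..\<epsilon>} \<union> {1-\<epsilon>..1}" using x1 by auto
    qed auto
    also have "\<dots> \<le> ennreal \<sigma> * (emeasure lborel {0..\<epsilon>} + emeasure lborel {1-\<epsilon>..1})"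
      by (intro mult_left_mono emeasure_subadditive) auto
    also have "\<dots> = ennreal \<sigma> * (ennreal \<epsilon> + ennreal \<epsilon>)" using e by simp
    also have "\<dots> = ennreal \<sigma> * ennreal (\<epsilon> + \<epsilon>)" using e by (subst ennreal_plus) auto
    also have "\<dots> = ennreal (\<sigma> * (\<epsilon> + \<epsilon>))" using e s by (subst ennreal_mult) auto
    also have "\<dots> = ennreal (2 * \<sigma> * \<epsilon>)" by (simp add: algebra_simps)
    finally show ?thesis using s e by (simp add: P.emeasure_eq_measure)
  qed
  have mE2: "measure NM (E2 p q) \<le> \<sigma> * \<epsilon>" if p: "p \<in> I" and q: "q \<in> I" and pq: "p \<noteq> q" for p q
  proof -
    interpret Q: prob_space "Mn q" using MM q by blast
    interpret Pp: prob_space "Mn p" using MM p by blast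
    have S2: "S \<in> sets (Mn p \<Otimes>\<^sub>M Mn q)" using Sb by (simp add: sets_pair_measure_cong[OF setsMn setsMn])
    have "emeasure NM (E2 p q) = emeasure (Mn p \<Otimes>\<^sub>M Mn q) S"
      unfolding E2_def NM by (rule pair_emeasure[of I Mn p q S, OF MM p q pq S2])
    also have "\<dots> = (\<integral>\<^sup>+x. emeasure (Mn q) (Pair x -` S) \<partial>Mn p)"
      by (rule Q.emeasure_pair_measure_alt[OF S2])
    also have "\<dots> \<le> (\<integral>\<^sup>+x. ennreal (\<sigma> * \<epsilon>) \<partial>Mn p)"
    proof (rule nn_integral_mono)
      fix x
      have "emeasure (Mn q) (Pair x -` S) \<le> ennreal \<sigma> * emeasure lborel {x..x+\<epsilon>}"
        unfolding Mnp
      proof (rule dens_bound)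
        show "g (fst q) (snd q) \<in> borel_measurable borel" "\<And>x. 0 \<le> g (fst q) (snd q) x \<and> g (fst q) (snd q) x \<le> \<sigma>"
          using gp[OF q] by auto
        have "Pair x -` S = {x..<x+\<epsilon>}" unfolding S_def by auto
        thus "Pair x -` S \<in> sets borel" by simp
        fix y assume "y \<in> Pair x -` S"
        thus "y \<in> {x..x+\<epsilon>}" unfolding S_def by auto
      qed auto
      also have "\<dots> = ennreal (\<sigma> * \<epsilon>)" using e s by (simp add: ennreal_mult)
      finally show "emeasure (Mn q) (Pair x -` S) \<le> ennreal (\<sigma> * \<epsilon>)" .
    qed
    also have "\<dots> = ennreal (\<sigma> * \<epsilon>)" by (simp add: Pp.emeasure_space_1)
    finally show ?thesis using s e by (simp add: P.emeasure_eq_measure)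
  qed
  let ?N = "real (card I)"
  have "measure NM {a \<in> space NM. \<not> good T k \<epsilon> a} \<le> measure NM (\<Union>p\<in>I. E1 p) + measure NM (\<Union>p\<in>I. \<Union>q\<in>I-{p}. E2 p q)"
    unfolding Bad_eq using E1s E2s finI by (intro measure_Un_le) auto
  also have "\<dots> \<le> (\<Sum>p\<in>I. measure NM (E1 p)) + (\<Sum>p\<in>I. measure NM (\<Union>q\<in>I-{p}. E2 p q))"
    using E1s E2s finI by (intro add_mono measure_UNION_le) auto
  also have "\<dots> \<le> (\<Sum>p\<in>I. 2 * \<sigma> * \<epsilon>) + (\<Sum>p\<in>I. \<Sum>q\<in>I-{p}. measure NM (E2 p q))"
    using E1s E2s finI mE1 by (intro add_mono sum_mono measure_UNION_le) auto
  also have "\<dots> \<le> (\<Sum>p\<in>I. 2 * \<sigma> * \<epsilon>) + (\<Sum>p\<in>I. \<Sum>q\<in>I-{p}. \<sigma> * \<epsilon>)"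
    using mE2 by (intro add_mono sum_mono) auto
  also have "\<dots> = ?N * (2 * \<sigma> * \<epsilon>) + (\<Sum>p\<in>I. (?N - 1) * (\<sigma> * \<epsilon>))"
  proof (cases "I = {}")
    case True thus ?thesis by simp
  next
    case False
    hence "1 \<le> card I" using finI by (simp add: Suc_le_eq card_gt_0_iff)
    thus ?thesis using finI by (simp add: card_Diff_singleton of_nat_diff)
  qed
  also have "\<dots> = \<sigma> * \<epsilon> * (?N^2 + ?N)" by (simp add: power2_eq_square algebra_simps)
  finally show "measure (nature_measure T k g) {a \<in> space (nature_measure T k g). \<not> good T k \<epsilon> a}
          \<le> \<sigma> * \<epsilon> * (real (card ({1..T}\<times>{1..<k}))^2 + real (card ({1..T}\<times>{1..<k})))"
    unfolding NM_def I_def .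
qed


lemma arith1: fixes K TT :: real assumes "2 \<le> K" "1 \<le> TT"
  shows "(TT * (K - 1))^2 + TT * (K - 1) \<le> K^2 * TT^2"
proof -
  have "TT * (1 - 2*K) \<le> 1 * (1 - 2*K)" using assms by (intro mult_right_mono_neg) auto
  hence "TT * (1 - 2*K) \<le> 1 - 2*K" by simp
  hence "TT * (1 - 2*K) + K - 1 \<le> 0" using assms by linarith
  hence "TT * (TT * (1 - 2*K) + K - 1) \<le> 0" using assms by (intro mult_nonneg_nonpos) auto
  thus ?thesis by (simp add: power2_eq_square algebra_simps)
qed

lemma ar2: "(cc::real) > 0 \<Longrightarrow> tt > 0 \<Longrightarrow> cc * (L / (cc * tt)) * tt = L"
  by (simp add: field_simps)

lemma ar6: "(cc::real) > 0 \<Longrightarrow> tt > 0 \<Longrightarrow> cc * L * tt * (L / (cc * tt)) = L^2"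
  by (simp add: field_simps power2_eq_square)

lemma ar3: "(et::real) > 0 \<Longrightarrow> B * et = 2 * L \<Longrightarrow> (L + L) / et = B"
  by (simp add: field_simps)

lemma ar4: "(K::real) > 0 \<Longrightarrow> TT > 0 \<Longrightarrow> (K^2 * TT^2) / (K^2 * TT^3) = 1 / TT"
  by (simp add: power2_eq_square power3_eq_cube field_simps)

lemma ar5: "(TT::real) > 0 \<Longrightarrow> mm \<le> 1 / TT \<Longrightarrow> TT * mm \<le> 1"
  by (simp add: pos_le_divide_eq mult.commute)

theorem corollary1:
  fixes T k :: nat and \<sigma> :: real
    and g :: "nat \<Rightarrow> nat \<Rightarrow> real \<Rightarrow> real"
    and v :: "nat \<Rightarrow> nat \<Rightarrow> real"
  assumes "T \<ge> 1" and "k \<ge> 1" and "\<sigma> \<ge> 1"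
    and dens: "\<forall>t\<in>{1..T}. \<forall>i\<in>{1..<k}.
         g t i \<in> borel_measurable borel \<and>
         (\<forall>x. 0 \<le> g t i x \<and> g t i x \<le> \<sigma>) \<and>
         (\<forall>x. x \<notin> {0<..<1} \<longrightarrow> g t i x = 0) \<and>
         prob_space (density lborel (\<lambda>x. ennreal (g t i x)))"
    and vals: "\<forall>t\<in>{1..T}. \<forall>i\<in>{1..k}. 0 \<le> v t i \<and> v t i \<le> 1"
  shows "(\<integral>a. (\<integral>xs. regret T k v a xs \<partial>(alg_measure (eta k T \<sigma>) k v T a))
            \<partial>(nature_measure T k g))
         \<le> 2 * sqrt ((exp 1 - 2) * ln (real k ^ 2 * real T ^ 3 * \<sigma>) * real T) + 1"
proof -
  note T1 = \<open>T \<ge> 1\<close> and k1 = \<open>k \<ge> 1\<close> and s1 = \<open>\<sigma> \<ge> 1\<close>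
  define L where "L = ln (real k ^ 2 * real T ^ 3 * \<sigma>)"
  define \<eta> where "\<eta> = eta k T \<sigma>"
  define B0 where "B0 = 2 * sqrt ((exp 1 - 2) * L * real T)"
  define NM where "NM = nature_measure T k g"
  define inner where "inner a = (\<integral>xs. regret T k v a xs \<partial>alg_measure \<eta> k v T a)" for a
  have e2: "1/2 \<le> exp 1 - (2::real)" by (rule e_ge)
  have kk: "1 \<le> real k ^ 2" "1 \<le> real T ^ 3" using k1 T1 by auto
  have kT: "1 \<le> real k ^ 2 * real T ^ 3 * \<sigma>"
  proof -
    have "1 * 1 \<le> real k ^ 2 * real T ^ 3" using kk by (intro mult_mono) auto
    hence "1 * 1 \<le> (real k ^ 2 * real T ^ 3) * \<sigma>" using s1 by (intro mult_mono) auto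
    thus ?thesis by simp
  qed
  have L0: "0 \<le> L" unfolding L_def using kT by simp
  have B0nn: "0 \<le> B0" unfolding B0_def using e2 L0 by simp
  have eta_eq: "\<eta> = sqrt (L / ((exp 1 - 2) * real T))" unfolding \<eta>_def eta_def L_def ..
  have eta0: "0 \<le> \<eta>" unfolding eta_eq using L0 e2 by simp
  have probNM: "prob_space NM" unfolding NM_def nature_measure_def
    by (rule prob_space_PiM) (use dens in auto)
  have main: "(\<integral>a. inner a \<partial>NM) \<le> B0 + 1"
  proof (cases "k = 1")
    case True
    have vals1: "\<forall>t\<in>{1..T}. \<forall>i\<in>{1..1}. 0 \<le> v t i \<and> v t i \<le> 1" using vals True by simp
    have "inner a = 0" for a unfolding inner_def True by (rule inner_k1[OF vals1 eta0])
    thus ?thesis using B0nn by (intro int_le_const[OF probNM]) auto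
  next
    case False
    hence k2: "2 \<le> k" using k1 by simp
    show ?thesis
    proof (cases "1 < \<eta>")
      case True
      have "1 < L / ((exp 1 - 2) * real T)" using True unfolding eta_eq by (simp only: real_sqrt_gt_1_iff)
      hence Lgt: "(exp 1 - 2) * real T < L" using e2 T1 by (simp add: pos_less_divide_eq)
      have "((exp 1 - 2) * real T) * ((exp 1 - 2) * real T) \<le> ((exp 1 - 2) * real T) * L"
        using Lgt e2 by (intro mult_left_mono) auto
      hence "sqrt (((exp 1 - 2) * real T)^2) \<le> sqrt ((exp 1 - 2) * L * real T)"
        by (simp add: power2_eq_square algebra_simps)
      hence "(exp 1 - 2) * real T \<le> sqrt ((exp 1 - 2) * L * real T)" using e2 by simp
      moreover have "1 * real T \<le> (2 * (exp 1 - 2)) * real T" using e2 by (intro mult_right_mono) auto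
      ultimately have TB: "real T \<le> B0" unfolding B0_def by (simp add: algebra_simps)
      have "inner a \<le> B0 + 1" for a
        using inner_le_T[OF k1 vals eta0, of a] TB unfolding inner_def by simp
      thus ?thesis using B0nn by (intro int_le_const[OF probNM]) auto
    next
      case False
      hence eta1: "\<eta> \<le> 1" by simp
      define \<epsilon> where "\<epsilon> = 1 / (real k ^ 2 * real T ^ 3 * \<sigma>)"
      have kT4: "4 \<le> real k ^ 2 * real T ^ 3 * \<sigma>"
      proof -
        have "(2::real)^2 \<le> real k ^ 2" using k2 by (intro power_mono) auto
        hence "4 \<le> real k ^ 2" by simp
        hence "4 * 1 \<le> real k ^ 2 * real T ^ 3" using kk by (intro mult_mono) auto
        hence "4 * 1 \<le> (real k ^ 2 * real T ^ 3) * \<sigma>" using s1 by (intro mult_mono) auto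
        thus ?thesis by simp
      qed
      have Lpos: "0 < L" unfolding L_def using kT4 by simp
      have etapos: "0 < \<eta>" unfolding eta_eq using Lpos e2 T1 by simp
      have epos: "0 < \<epsilon>" and e1: "\<epsilon> \<le> 1" unfolding \<epsilon>_def using kT by auto
      have lnE: "ln (1/\<epsilon>) = L" unfolding \<epsilon>_def L_def by simp
      have eta2: "\<eta>\<^sup>2 = L / ((exp 1 - 2) * real T)" unfolding eta_eq using Lpos e2 T1 by simp
      have B0eta: "B0 * \<eta> = 2 * L"
      proof -
        have "B0 * \<eta> = 2 * (sqrt ((exp 1 - 2) * L * real T) * sqrt (L / ((exp 1 - 2) * real T)))"
          unfolding B0_def eta_eq by simp
        also have "\<dots> = 2 * sqrt ((exp 1 - 2) * L * real T * (L / ((exp 1 - 2) * real T)))"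
          by (subst real_sqrt_mult) simp
        also have "(exp 1 - 2) * L * real T * (L / ((exp 1 - 2) * real T)) = L^2"
          using e2 T1 by (intro ar6) auto
        finally show ?thesis using L0 by simp
      qed
      have hedge: "inner a \<le> B0" if "good T k \<epsilon> a" for a
      proof -
        have "inner a \<le> (ln (1/\<epsilon>) + (exp 1 - 2) * \<eta>\<^sup>2 * T) / \<eta>"
          unfolding inner_def by (rule inner_le_hedge[OF k1 vals eta0 that epos e1 etapos eta1])
        also have "(exp 1 - 2) * \<eta>\<^sup>2 * T = L" unfolding eta2 using e2 T1 by (intro ar2) auto
        also have "(ln (1/\<epsilon>) + L) / \<eta> = B0" unfolding lnE using B0eta etapos by (intro ar3)
        finally show ?thesis .
      qed
      define Bad where "Bad = {a \<in> space NM. \<not> good T k \<epsilon> a}"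
      have s0: "0 \<le> \<sigma>" using s1 by simp
      have Bads: "Bad \<in> sets NM" unfolding Bad_def NM_def by (rule bad_bound(1)[OF dens epos s0])
      have mB: "measure NM Bad \<le> \<sigma> * \<epsilon> * (real (card ({1..T}\<times>{1..<k}))^2 + real (card ({1..T}\<times>{1..<k})))"
        unfolding Bad_def NM_def by (rule bad_bound(2)[OF dens epos s0])
      have card: "real (card ({1..T}\<times>{1..<k})) = real T * (real k - 1)"
        using k1 by (simp add: card_cartesian_product of_nat_diff)
      have "\<sigma> * \<epsilon> = 1 / (real k ^ 2 * real T ^ 3)" unfolding \<epsilon>_def using s1 by simp
      hence "measure NM Bad \<le> ((real T * (real k - 1))^2 + real T * (real k - 1)) / (real k ^ 2 * real T ^ 3)"
        using mB unfolding card by simp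
      also have "\<dots> \<le> (real k ^ 2 * real T ^ 2) / (real k ^ 2 * real T ^ 3)"
        using arith1[of "real k" "real T"] k2 T1 by (intro divide_right_mono) auto
      also have "\<dots> = 1 / real T" using k1 T1 by (intro ar4) auto
      finally have mB2: "real T * measure NM Bad \<le> 1" using T1 by (intro ar5) auto
      have pw: "inner a \<le> B0 + real T * indicator Bad a" if "a \<in> space NM" for a
      proof (cases "a \<in> Bad")
        case True
        have "inner a \<le> T" unfolding inner_def by (rule inner_le_T[OF k1 vals eta0])
        thus ?thesis using True B0nn by simp
      next
        case False
        hence "good T k \<epsilon> a" using that unfolding Bad_def by auto
        thus ?thesis using hedge False by simp
      qed
      show ?thesis
      proof (cases "integrable NM inner")
        case True
        interpret P: prob_space NM by (rule probNM)
        have indint: "integrable NM (indicator Bad :: _ \<Rightarrow> real)"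
          using Bads by (intro integrable_real_indicator) (auto simp: P.emeasure_eq_measure)
        have int2: "integrable NM (\<lambda>a. B0 + real T * indicator Bad a)"
          using Bads by (intro Bochner_Integration.integrable_add integrable_mult_right integrable_real_indicator) (auto simp: P.emeasure_eq_measure)
        have "(\<integral>a. inner a \<partial>NM) \<le> (\<integral>a. B0 + real T * indicator Bad a \<partial>NM)"
          by (rule integral_mono[OF True int2 pw])
        also have "\<dots> = B0 + real T * measure NM Bad"
          using Bads indint by (subst Bochner_Integration.integral_add) (auto simp: P.prob_space Int_absorb2 sets.sets_into_space)
        also have "\<dots> \<le> B0 + 1" using mB2 by simp
        finally show ?thesis .
      next
        case False thus ?thesis using B0nn by (simp add: not_integrable_integral_eq)
      qed
    qed
  qed
  thus ?thesis unfolding inner_def \<eta>_def B0_def L_def NM_def .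
qed


end
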